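(* Let $S$ be a nonempty set of graphs on $\Pi$. Then $\mathrm{eqdom}(S)$-set agreement is solvable in one round on the closed-above model generated by $S$.
   Context: Fix a set of $n$ processes $\Pi=\{p_1,\dots,p_n\}$. A graph is a directed graph with vertex set $\Pi$; every graph is assumed to contain all self-loops $(p,p)$. For a graph $G$ and $p\in\Pi$, $Out_G(p)=\{q:(p,q)\in E(G)\}$ and $In_G(p)=\{q:(q,p)\in E(G)\}$ (both contain $p$); for $P\subseteq\Pi$, $Out_G(P)=\bigcup_{p\in P}Out_G(p)$. Computation proceeds in failure-free, communication-closed rounds: in each round $r$ a graph $G_r$ is chosen and each process $p$ receives in round $r$ exactly the round-$r$ messages of the processes in $In_{G_r}(p)$. A communication model is a set of infinite sequences of graphs; an execution is allowed iff its sequence of round graphs belongs to the model. For a graph $G$, $\uparrow G=\{H: E(H)\supseteq E(G)\}$. The closed-above model generated by a set $S$ of graphs is $(\bigcup_{G\in S}\uparrow G)^\omega$. In $k$-set agreement each process starts with an input from a totally ordered set $V_{in}$ and must decide a value so that every decided value is the input of some process and at most $k$ distinct values are decided. $k$-set agreement is solvable in $r$ rounds on a model if some algorithm guarantees, in every allowed execution and for every input assignment, that all processes decide after $r$ rounds satisfying these conditions. For a graph $G$, $\mathrm{eqdom}(G)=\min\{i\in[1,n]: \forall P\subseteq\Pi,\ |P|=i\Rightarrow Out_G(P)=\Pi\}$, and for a set $S$ of graphs $\mathrm{eqdom}(S)=\max_{G\in S}\mathrm{eqdom}(G)$. *)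

theory Defs
  imports Main
begin

text \<open>Processes are the elements of a finite type 'p (so Pi = UNIV, n = its cardinality).
A graph is its edge set, required to contain all self-loops.\<close>

type_synonym 'p graph = "('p \<times> 'p) set"

definition is_graph :: "'p graph \<Rightarrow> bool" where
  "is_graph G \<longleftrightarrow> (\<forall>p. (p, p) \<in> G)"

definition Out :: "'p graph \<Rightarrow> 'p \<Rightarrow> 'p set" where
  "Out G p = {q. (p, q) \<in> G}"

definition In :: "'p graph \<Rightarrow> 'p \<Rightarrow> 'p set" where
  "In G p = {q. (q, p) \<in> G}"

definition OutSet :: "'p graph \<Rightarrow> 'p set \<Rightarrow> 'p set" where
  "OutSet G P = (\<Union>p\<in>P. Out G p)"

definition up :: "'p graph \<Rightarrow> 'p graph set" where
  "up G = {H. is_graph H \<and> G \<subseteq> H}"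

text \<open>Communication model: set of infinite sequences of graphs; sigma r is the graph
of round r+1.\<close>
definition closed_above_model :: "'p graph set \<Rightarrow> (nat \<Rightarrow> 'p graph) set" where
  "closed_above_model S = {\<sigma>. \<forall>r. \<sigma> r \<in> (\<Union>G\<in>S. up G)}"

definition eqdom :: "('p::finite) graph \<Rightarrow> nat" where
  "eqdom G = Min {i. 1 \<le> i \<and> i \<le> card (UNIV :: 'p set) \<and> (\<forall>P::'p set. card P = i \<longrightarrow> OutSet G P = UNIV)}"

definition eqdom_set :: "('p::finite) graph set \<Rightarrow> nat" where
  "eqdom_set S = Max (eqdom ` S)"

definition view1 :: "'p graph \<Rightarrow> ('p \<Rightarrow> 'v) \<Rightarrow> 'p \<Rightarrow> ('p \<Rightarrow> 'v option)" where
  "view1 G x p = (\<lambda>q. if q \<in> In G p then Some (x q) else None)"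

text \<open>Full-information algorithms are the most general deterministic one-round algorithms.
k-set agreement is solvable in one round on model M if some such algorithm satisfies
validity and k-agreement in every allowed execution and for every input assignment.\<close>
definition kset_solvable_one_round ::
  "nat \<Rightarrow> (nat \<Rightarrow> 'p graph) set \<Rightarrow> ('v::linorder) itself \<Rightarrow> bool" where
  "kset_solvable_one_round k M TYPE_V \<longleftrightarrow>
     (\<exists>dec :: 'p \<Rightarrow> ('p \<Rightarrow> 'v option) \<Rightarrow> 'v.
        \<forall>\<sigma>\<in>M. \<forall>x :: 'p \<Rightarrow> 'v.
          (\<forall>p. dec p (view1 (\<sigma> 0) x p) \<in> range x) \<and>
          card (range (\<lambda>p. dec p (view1 (\<sigma> 0) x p))) \<le> k)"

end

theory Submission
  imports Defs
begin

lemma eqdom_prop: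
  fixes G :: "('p::finite) graph"
  assumes "is_graph G"
  shows "\<forall>P::'p set. card P = eqdom G \<longrightarrow> OutSet G P = UNIV"
proof -
  let ?A = "{i. 1 \<le> i \<and> i \<le> card (UNIV :: 'p set) \<and> (\<forall>P::'p set. card P = i \<longrightarrow> OutSet G P = UNIV)}"
  have "card (UNIV::'p set) \<in> ?A"
  proof -
    have "1 \<le> card (UNIV::'p set)" by (simp add: Suc_leI finite_UNIV_card_ge_0)
    moreover have "\<forall>P::'p set. card P = card (UNIV::'p set) \<longrightarrow> OutSet G P = UNIV"
    proof (intro allI impI)
      fix P :: "'p set" assume "card P = card (UNIV::'p set)"
      hence "P = UNIV" by (simp add: card_eq_UNIV_imp_eq_UNIV)
      thus "OutSet G P = UNIV" using assms
        unfolding OutSet_def Out_def is_graph_def by auto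
    qed
    ultimately show ?thesis by simp
  qed
  hence "?A \<noteq> {}" by blast
  moreover have "finite ?A" by (rule finite_subset[of _ "{..card (UNIV::'p set)}"]) auto
  ultimately have "Min ?A \<in> ?A" by (rule Min_in[rotated])
  thus ?thesis unfolding eqdom_def by blast
qed

definition decmin :: "'p \<Rightarrow> ('p \<Rightarrow> 'v option) \<Rightarrow> ('v::linorder)" where
  "decmin p v = Min {a. Some a \<in> range v}"

lemma view_vals: "{a. Some a \<in> range (view1 H x p)} = x ` In H p"
  unfolding view1_def by (auto split: if_splits)

theorem theorem2:
  fixes S :: "('p::finite) graph set"
  assumes "S \<noteq> {}"
    and "\<forall>G\<in>S. is_graph G"
  shows "kset_solvable_one_round (eqdom_set S) (closed_above_model S) TYPE('v::linorder)"
  unfolding kset_solvable_one_round_def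
proof (intro exI[of _ "decmin :: 'p \<Rightarrow> ('p \<Rightarrow> 'v option) \<Rightarrow> 'v"] ballI allI)
  fix \<sigma> and x :: "'p \<Rightarrow> 'v" assume "\<sigma> \<in> closed_above_model S"
  then obtain G where GS: "G \<in> S" and H: "\<sigma> 0 \<in> up G"
    unfolding closed_above_model_def by blast
  define H where "H = \<sigma> 0"
  have Hg: "is_graph H" and GH: "G \<subseteq> H" using H unfolding up_def H_def by auto
  have dec_eq: "decmin p (view1 H x p) = Min (x ` In H p)" for p and x :: "'p \<Rightarrow> 'v"
    unfolding decmin_def view_vals ..
  have pin: "p \<in> In H p" for p using Hg unfolding is_graph_def In_def by auto
  have A: "\<forall>p. decmin p (view1 (\<sigma> 0) x p) \<in> range x"
  proof
    fix p
    have "Min (x ` In H p) \<in> x ` In H p" using pin[of p] by (intro Min_in) auto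
    thus "decmin p (view1 (\<sigma> 0) x p) \<in> range x" unfolding H_def[symmetric] dec_eq[of p x] by blast
  qed
  hence inr: "decmin p (view1 (\<sigma> 0) x p) \<in> range x" for p by blast
  let ?d = "eqdom G"
  have dom: "\<forall>P::'p set. card P = ?d \<longrightarrow> OutSet G P = UNIV"
    using eqdom_prop assms(2) GS by blast
  have "?d \<le> eqdom_set S" unfolding eqdom_set_def using GS by (intro Max_ge) auto
  moreover have "card (range (\<lambda>p. decmin p (view1 (\<sigma> 0) x p))) \<le> ?d"
  proof (rule ccontr)
    let ?D = "range (\<lambda>p. decmin p (view1 (\<sigma> 0) x p))"
    assume "\<not> card ?D \<le> ?d"
    hence cD: "card ?D > ?d" by simp
    have fD: "finite ?D" by simp
    hence "?D \<noteq> {}" by auto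
    define m where "m = Max ?D"
    have mD: "m \<in> ?D" unfolding m_def using fD \<open>?D \<noteq> {}\<close> by (rule Min_in[OF _ _] Max_in)
    have "card (?D - {m}) \<ge> ?d" using cD mD fD by (simp add: card_Diff_singleton)
    then obtain D' where D': "D' \<subseteq> ?D - {m}" "card D' = ?d"
      using obtain_subset_with_card_n by metis
    have "\<forall>v\<in>D'. \<exists>q. x q = v" using D'(1) inr by (metis (no_types, lifting) DiffD1 imageE subsetD)
    then obtain f where f: "\<forall>v\<in>D'. x (f v) = v" by metis
    have inj: "inj_on f D'" using f by (metis inj_onI)
    have "card (f ` D') = ?d" using inj D'(2) by (simp add: card_image)
    hence "OutSet G (f ` D') = UNIV" using dom by blast
    obtain p where p: "m = decmin p (view1 (\<sigma> 0) x p)" using mD by blast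
    from \<open>OutSet G (f ` D') = UNIV\<close> obtain v where v: "v \<in> D'" "(f v, p) \<in> G"
      unfolding OutSet_def Out_def by blast
    have "f v \<in> In H p" using v GH unfolding In_def by auto
    hence "m \<le> x (f v)" unfolding p H_def[symmetric] dec_eq by (intro Min_le) auto
    moreover have "x (f v) \<le> m" unfolding m_def using f v D'(1) fD by (intro Max_ge) auto
    moreover have "x (f v) \<noteq> m" using f v D'(1) by auto
    ultimately show False by simp
  qed
  ultimately show "(\<forall>p. decmin p (view1 (\<sigma> 0) x p) \<in> range x) \<and> card (range (\<lambda>p. decmin p (view1 (\<sigma> 0) x p))) \<le> eqdom_set S" using A by simp
qed

end
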